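(* Let $x,y\in\mathcal{X}$, let $R'$ be a ranking with $xR'y$, and let $\mathrel{W}$ be a tournament that agrees with $R'$ on every pair $\{z,w\}\nsubseteq[x,y]_{R'}$. Then the outcome under $\mathrel{W}$ of any strategy agrees with $R'$ on every pair $\{z,w\}\nsubseteq[x,y]_{R'}$.
   Context: Let $\mathcal{X}$ be a finite set of alternatives. A proto-ranking is an irreflexive and transitive binary relation on $\mathcal{X}$; a ranking is a total proto-ranking; a tournament is a total and asymmetric binary relation on $\mathcal{X}$. Two relations agree on a pair $\{z,w\}$ if they relate $z$ and $w$ in the same direction. For $xR'y$, $[x,y]_{R'}=\{x,y\}\cup\{c: xR'cR'y\}$. Interaction: given a tournament $\mathrel{W}$, start from $R_0=\varnothing$; in each period with $R_{t-1}$ not total a chair offers a pair $\{u,v\}$ of distinct alternatives unranked by $R_{t-1}$, the winner is $u$ if $u\mathrel{W}v$ and $v$ otherwise, and $R_t$ is the transitive closure of $R_{t-1}\cup\{(\text{winner},\text{loser})\}$; stop when $R_t$ is total. A strategy assigns to each non-terminal history (sequence of (winner, loser) pairs) a pair unranked at it; its outcome under $\mathrel{W}$ is the final ranking. *)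

theory Defs
  imports Main
begin

definition proto_ranking :: "'a set \<Rightarrow> 'a rel \<Rightarrow> bool" where
  "proto_ranking X R \<longleftrightarrow> R \<subseteq> X \<times> X \<and> irrefl R \<and> trans R"

definition ranking :: "'a set \<Rightarrow> 'a rel \<Rightarrow> bool" where
  "ranking X R \<longleftrightarrow> proto_ranking X R \<and> total_on X R"

definition tournament :: "'a set \<Rightarrow> 'a rel \<Rightarrow> bool" where
  "tournament X W \<longleftrightarrow> W \<subseteq> X \<times> X \<and> total_on X W \<and> asym W"

definition agree_on_pair :: "'a rel \<Rightarrow> 'a rel \<Rightarrow> 'a \<Rightarrow> 'a \<Rightarrow> bool" where
  "agree_on_pair R1 R2 z w \<longleftrightarrow>
     ((z, w) \<in> R1 \<longleftrightarrow> (z, w) \<in> R2) \<and> ((w, z) \<in> R1 \<longleftrightarrow> (w, z) \<in> R2)"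

definition interval :: "'a rel \<Rightarrow> 'a \<Rightarrow> 'a \<Rightarrow> 'a set" where
  "interval R x y = {x, y} \<union> {c. (x, c) \<in> R \<and> (c, y) \<in> R}"

(* histories: lists of (winner, loser) pairs; the relation R_t at a history *)
definition rel_of :: "('a \<times> 'a) list \<Rightarrow> 'a rel" where
  "rel_of h = trancl (set h)"

definition unranked :: "'a set \<Rightarrow> 'a rel \<Rightarrow> 'a \<times> 'a \<Rightarrow> bool" where
  "unranked X R p \<longleftrightarrow> fst p \<in> X \<and> snd p \<in> X \<and> fst p \<noteq> snd p
     \<and> (fst p, snd p) \<notin> R \<and> (snd p, fst p) \<notin> R"

definition terminal :: "'a set \<Rightarrow> ('a \<times> 'a) list \<Rightarrow> bool" where
  "terminal X h \<longleftrightarrow> total_on X (rel_of h)"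

inductive history :: "'a set \<Rightarrow> ('a \<times> 'a) list \<Rightarrow> bool" for X where
  Nil: "history X []"
| Step: "history X h \<Longrightarrow> \<not> terminal X h \<Longrightarrow> unranked X (rel_of h) (u, v) \<Longrightarrow>
         history X (h @ [(u, v)])"

definition strategy :: "'a set \<Rightarrow> (('a \<times> 'a) list \<Rightarrow> 'a \<times> 'a) \<Rightarrow> bool" where
  "strategy X \<sigma> \<longleftrightarrow> (\<forall>h. history X h \<and> \<not> terminal X h \<longrightarrow> unranked X (rel_of h) (\<sigma> h))"

definition winner_loser :: "'a rel \<Rightarrow> 'a \<times> 'a \<Rightarrow> 'a \<times> 'a" where
  "winner_loser W p = (if (fst p, snd p) \<in> W then (fst p, snd p) else (snd p, fst p))"

definition play_step :: "'a set \<Rightarrow> (('a \<times> 'a) list \<Rightarrow> 'a \<times> 'a) \<Rightarrow> 'a rel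
    \<Rightarrow> ('a \<times> 'a) list \<Rightarrow> ('a \<times> 'a) list" where
  "play_step X \<sigma> W h = (if terminal X h then h else h @ [winner_loser W (\<sigma> h)])"

definition play :: "'a set \<Rightarrow> (('a \<times> 'a) list \<Rightarrow> 'a \<times> 'a) \<Rightarrow> 'a rel \<Rightarrow> nat \<Rightarrow> ('a \<times> 'a) list" where
  "play X \<sigma> W n = (play_step X \<sigma> W ^^ n) []"

definition outcome :: "'a set \<Rightarrow> (('a \<times> 'a) list \<Rightarrow> 'a \<times> 'a) \<Rightarrow> 'a rel \<Rightarrow> 'a rel" where
  "outcome X \<sigma> W = rel_of (play X \<sigma> W (LEAST n. terminal X (play X \<sigma> W n)))"

end

theory Submission
  imports Defs
begin

lemma T_trans:
  assumes r: "ranking X R'" and xy: "(x, y) \<in> R'"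
  shows "trans {(a,b). (a,b) \<in> R' \<or> (a \<in> interval R' x y \<and> b \<in> interval R' x y)}"
proof -
  let ?I = "interval R' x y"
  have sub: "R' \<subseteq> X \<times> X" and ir: "irrefl R'" and tr: "trans R'" and tot: "total_on X R'"
    using r unfolding ranking_def proto_ranking_def by auto
  have Ii: "c \<in> ?I \<longleftrightarrow> c = x \<or> c = y \<or> ((x,c) \<in> R' \<and> (c,y) \<in> R')" for c
    unfolding interval_def by auto
  have tr': "(a,b) \<in> R' \<Longrightarrow> (b,c) \<in> R' \<Longrightarrow> (a,c) \<in> R'" for a b c using tr by (meson transD)
  have ir': "(a,a) \<notin> R'" for a using ir by (simp add: irrefl_def)
  have totx: "a \<in> X \<Longrightarrow> b \<in> X \<Longrightarrow> a \<noteq> b \<Longrightarrow> (a,b) \<in> R' \<or> (b,a) \<in> R'" for a b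
    using tot by (simp add: total_on_def)
  have xX: "x \<in> X" "y \<in> X" using xy sub by auto
  have L: "(a,c) \<in> R'" if "a \<notin> ?I" "(a,b) \<in> R'" "b \<in> ?I" "c \<in> ?I" for a b c
  proof -
    have aX: "a \<in> X" using that sub by auto
    have "a \<noteq> x" "a \<noteq> y" using that Ii by auto
    have "(a,x) \<in> R'"
    proof (rule ccontr)
      assume "(a,x) \<notin> R'"
      hence "(x,a) \<in> R'" using totx[OF aX xX(1)] \<open>a \<noteq> x\<close> by auto
      hence "(a,y) \<notin> R'" using that(1) Ii by auto
      hence "(y,a) \<in> R'" using totx[OF aX xX(2)] \<open>a \<noteq> y\<close> by auto
      moreover have "b = y \<or> (b,y) \<in> R'" using that(3) Ii xy by auto
      ultimately have "(b,a) \<in> R'" using tr' by blast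
      with that(2) show False using tr' ir' by blast
    qed
    moreover have "c = x \<or> (x,c) \<in> R'" using that(4) Ii xy by auto
    ultimately show ?thesis using tr' by blast
  qed
  have L2: "(a,c) \<in> R'" if "c \<notin> ?I" "(b,c) \<in> R'" "b \<in> ?I" "a \<in> ?I" for a b c
  proof -
    have cX: "c \<in> X" using that sub by auto
    have "c \<noteq> x" "c \<noteq> y" using that Ii by auto
    have "(y,c) \<in> R'"
    proof (rule ccontr)
      assume "(y,c) \<notin> R'"
      hence "(c,y) \<in> R'" using totx[OF cX xX(2)] \<open>c \<noteq> y\<close> by auto
      hence "(x,c) \<notin> R'" using that(1) Ii by auto
      hence "(c,x) \<in> R'" using totx[OF cX xX(1)] \<open>c \<noteq> x\<close> by auto
      moreover have "b = x \<or> (x,b) \<in> R'" using that(3) Ii xy by auto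
      ultimately have "(c,b) \<in> R'" using tr' by blast
      with that(2) show False using tr' ir' by blast
    qed
    moreover have "a = y \<or> (a,y) \<in> R'" using that(4) Ii xy by auto
    ultimately show ?thesis using tr' by blast
  qed
  show ?thesis
  proof (rule transI)
    fix a b c
    assume "(a, b) \<in> {(a,b). (a,b) \<in> R' \<or> (a \<in> ?I \<and> b \<in> ?I)}"
      "(b, c) \<in> {(a,b). (a,b) \<in> R' \<or> (a \<in> ?I \<and> b \<in> ?I)}"
    hence 1: "(a, b) \<in> R' \<or> a \<in> ?I \<and> b \<in> ?I" and 2: "(b, c) \<in> R' \<or> b \<in> ?I \<and> c \<in> ?I"
      by auto
    have "(a, c) \<in> R' \<or> a \<in> ?I \<and> c \<in> ?I"
    proof (cases "(a,b) \<in> R'")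
      case True
      show ?thesis
      proof (cases "(b,c) \<in> R'")
        case True thus ?thesis using \<open>(a,b) \<in> R'\<close> tr' by blast
      next
        case False thus ?thesis using 2 True L by blast
      qed
    next
      case False
      hence ab: "a \<in> ?I" "b \<in> ?I" using 1 by auto
      show ?thesis
      proof (cases "(b,c) \<in> R'")
        case True thus ?thesis using ab L2 by blast
      next
        case False thus ?thesis using 2 ab by blast
      qed
    qed
    thus "(a, c) \<in> {(a,b). (a,b) \<in> R' \<or> (a \<in> ?I \<and> b \<in> ?I)}" by simp
  qed
qed

lemma play_Suc: "play X \<sigma> W (Suc n) = play_step X \<sigma> W (play X \<sigma> W n)"
  unfolding play_def by simp

lemma history_sub: "history X h \<Longrightarrow> set h \<subseteq> X \<times> X"
  by (induction rule: history.induct) (auto simp: unranked_def)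

lemma rel_of_sub: "history X h \<Longrightarrow> rel_of h \<subseteq> X \<times> X"
  unfolding rel_of_def using history_sub trancl_subset_Sigma by blast

lemma unranked_swap: "unranked X R (u,v) \<Longrightarrow> unranked X R (v,u)"
  by (auto simp: unranked_def)

theorem lemma3:
  fixes X :: "'a set" and R' W :: "'a rel" and x y :: 'a
    and \<sigma> :: "('a \<times> 'a) list \<Rightarrow> 'a \<times> 'a"
  assumes "finite X"
    and "ranking X R'"
    and "(x, y) \<in> R'"
    and "tournament X W"
    and "\<forall>z\<in>X. \<forall>w\<in>X. \<not> {z, w} \<subseteq> interval R' x y \<longrightarrow> agree_on_pair W R' z w"
    and "strategy X \<sigma>"
  shows "\<forall>z\<in>X. \<forall>w\<in>X. \<not> {z, w} \<subseteq> interval R' x y \<longrightarrow> agree_on_pair (outcome X \<sigma> W) R' z w"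
proof -
  let ?I = "interval R' x y"
  define T where "T = {(a,b). (a,b) \<in> R' \<or> (a \<in> ?I \<and> b \<in> ?I)}"
  define P where "P = play X \<sigma> W"
  have transT: "trans T" unfolding T_def using T_trans[OF assms(2,3)] .
  have sub: "R' \<subseteq> X \<times> X" and ir: "irrefl R'" and tr: "trans R'" and tot: "total_on X R'"
    using assms(2) unfolding ranking_def proto_ranking_def by auto
  have Wt: "total_on X W" and Was: "asym W" using assms(4) unfolding tournament_def by auto
  have step: "P (Suc n) = (if terminal X (P n) then P n else P n @ [winner_loser W (\<sigma> (P n))])" for n
    unfolding P_def play_Suc play_step_def by simp
  have wl: "winner_loser W (\<sigma> h) \<in> W \<inter> T \<and> unranked X (rel_of h) (winner_loser W (\<sigma> h))"
    if "history X h" "\<not> terminal X h" for h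
  proof -
    obtain u v where uv: "\<sigma> h = (u,v)" by fastforce
    have un: "unranked X (rel_of h) (u,v)" using assms(6) that uv unfolding strategy_def by metis
    hence uX: "u \<in> X" "v \<in> X" "u \<noteq> v" by (auto simp: unranked_def)
    have inW: "winner_loser W (u,v) \<in> W"
      using Wt uX unfolding winner_loser_def total_on_def by auto
    have "winner_loser W (u,v) \<in> T"
    proof (cases "{u,v} \<subseteq> ?I")
      case True thus ?thesis unfolding T_def winner_loser_def by auto
    next
      case False
      hence "agree_on_pair W R' u v" using assms(5) uX by blast
      thus ?thesis using inW unfolding T_def winner_loser_def agree_on_pair_def
        by (auto split: if_splits)
    qed
    moreover have "unranked X (rel_of h) (winner_loser W (u,v))"
      using un unranked_swap unfolding winner_loser_def by auto
    ultimately show ?thesis using inW uv by simp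
  qed
  have inv: "history X (P n) \<and> set (P n) \<subseteq> T" for n
  proof (induction n)
    case 0 show ?case by (simp add: P_def play_def history.Nil)
  next
    case (Suc n)
    show ?case
    proof (cases "terminal X (P n)")
      case True thus ?thesis using Suc step by simp
    next
      case False
      obtain a b where ab: "winner_loser W (\<sigma> (P n)) = (a,b)" by fastforce
      from wl[of "P n"] Suc False ab
      have "history X (P n @ [(a,b)])" "(a,b) \<in> T"
        by (auto intro: history.Step)
      thus ?thesis using Suc False step ab by simp
    qed
  qed
  have fin: "finite (X \<times> X)" using assms(1) by simp
  have ex: "\<exists>n. terminal X (P n)"
  proof (rule ccontr)
    assume nt: "\<not> ?thesis"
    have "n \<le> card (rel_of (P n))" for n
    proof (induction n)
      case 0 show ?case by simp
    next
      case (Suc n)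
      have nT: "\<not> terminal X (P n)" using nt by blast
      obtain a b where ab: "winner_loser W (\<sigma> (P n)) = (a,b)" by fastforce
      have un: "unranked X (rel_of (P n)) (a,b)" using wl[of "P n"] inv nT ab by auto
      have eq: "P (Suc n) = P n @ [(a,b)]" using step nT ab by simp
      have "rel_of (P n) \<subset> rel_of (P (Suc n))"
      proof
        show "rel_of (P n) \<subseteq> rel_of (P (Suc n))" unfolding eq rel_of_def
          by (auto elim: trancl_mono)
        have "(a,b) \<in> rel_of (P (Suc n))" unfolding eq rel_of_def by auto
        moreover have "(a,b) \<notin> rel_of (P n)" using un by (auto simp: unranked_def)
        ultimately show "rel_of (P n) \<noteq> rel_of (P (Suc n))" by blast
      qed
      moreover have "finite (rel_of (P (Suc n)))"
        using rel_of_sub inv fin finite_subset by metis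
      ultimately have "card (rel_of (P n)) < card (rel_of (P (Suc n)))"
        by (rule psubset_card_mono[rotated])
      thus ?case using Suc by simp
    qed
    hence "Suc (card (X \<times> X)) \<le> card (rel_of (P (Suc (card (X \<times> X)))))" .
    moreover have "card (rel_of (P (Suc (card (X \<times> X))))) \<le> card (X \<times> X)"
      using rel_of_sub inv fin card_mono by metis
    ultimately show False by simp
  qed
  define k where "k = (LEAST n. terminal X (P n))"
  have termk: "terminal X (P k)" unfolding k_def using ex by (rule LeastI_ex)
  define O' where "O' = outcome X \<sigma> W"
  have O'eq: "O' = rel_of (P k)" unfolding O'_def outcome_def k_def P_def by simp
  have Otot: "total_on X O'" using termk O'eq by (simp add: terminal_def)
  have OT: "O' \<subseteq> T" unfolding O'eq rel_of_def
    using inv[of k] trancl_id[OF transT] trancl_mono by blast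
  have key: "(a,b) \<in> O' \<longleftrightarrow> (a,b) \<in> R'" if "a \<in> X" "b \<in> X" "\<not> {a,b} \<subseteq> ?I" for a b
  proof
    assume "(a,b) \<in> O'" thus "(a,b) \<in> R'" using OT that unfolding T_def by auto
  next
    assume ab: "(a,b) \<in> R'"
    hence "a \<noteq> b" using ir by (auto simp: irrefl_def)
    hence "(a,b) \<in> O' \<or> (b,a) \<in> O'" using Otot that by (auto simp: total_on_def)
    moreover have "(b,a) \<notin> O'"
    proof
      assume "(b,a) \<in> O'"
      hence "(b,a) \<in> R'" using OT that unfolding T_def by auto
      with ab show False using ir tr by (metis irrefl_def transD)
    qed
    ultimately show "(a,b) \<in> O'" by blast
  qed
  show ?thesis
  proof (intro ballI impI)
    fix z w assume "z \<in> X" "w \<in> X" "\<not> {z, w} \<subseteq> ?I"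
    moreover hence "\<not> {w, z} \<subseteq> ?I" by auto
    ultimately show "agree_on_pair (outcome X \<sigma> W) R' z w"
      unfolding agree_on_pair_def O'_def[symmetric] using key by blast
  qed
qed

end
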